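(* Let $q,n,h,t$ be positive integers with $h\le n$, and suppose $t+1$ divides $q$. For $j\in\{0,1,\dots,t\}$ let $$\mathcal C_q^{(j)}(n;t)=\Big\{\mathbf x\in[q]^n:\ \sum_{i=1}^n x_i\equiv j\pmod{t+1}\Big\}.$$ Then for every $j\in\{0,1,\dots,t\}$, $\mathcal C_q^{(j)}(n;t)$ is an optimal $(\cdot,h,t)$-AED code in $[q]^n$ (i.e., it is $(\cdot,h,t)$-AED and has the largest cardinality among all $(\cdot,h,t)$-AED codes in $[q]^n$), and $|\mathcal C_q^{(j)}(n;t)|=\frac{q^n}{t+1}$.
   Context: $[q]=\{0,1,\dots,q-1\}$. Channel over $[q]$ with $(\cdot,h,t)$-asymmetric errors: an input $\mathbf x\in[q]^n$ can produce any output $\mathbf y\in[q]^n$ satisfying $y_i\ge x_i$ for all $i$, $\sum_{i=1}^n\mathbb 1_{\{y_i\ne x_i\}}\le h$, and $\sum_{i=1}^n(y_i-x_i)\le t$ (no separate bound on the amplitude $y_i-x_i$). $\mathrm{Out}(\mathbf x)$ denotes the set of all such outputs. A code $\mathcal C\subseteq[q]^n$ is $(\cdot,h,t)$-AED if for all $\mathbf x\in\mathcal C$ and $\mathbf y\in\mathrm{Out}(\mathbf x)$ with $\mathbf y\ne\mathbf x$, we have $\mathbf y\notin\mathcal C$. *)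

theory Defs
  imports Complex_Main
begin

text \<open>Words in [q]^n are represented as functions nat => nat, with entries at
positions 0..n-1 below q and value 0 at every position >= n.\<close>

definition words :: "nat \<Rightarrow> nat \<Rightarrow> (nat \<Rightarrow> nat) set" where
  "words q n = {x. (\<forall>i<n. x i < q) \<and> (\<forall>i\<ge>n. x i = 0)}"

definition Out :: "nat \<Rightarrow> nat \<Rightarrow> nat \<Rightarrow> nat \<Rightarrow> (nat \<Rightarrow> nat) \<Rightarrow> (nat \<Rightarrow> nat) set" where
  "Out q n h t x = {y \<in> words q n. (\<forall>i<n. x i \<le> y i)
       \<and> card {i. i < n \<and> y i \<noteq> x i} \<le> h
       \<and> (\<Sum>i<n. y i - x i) \<le> t}"

definition AED :: "nat \<Rightarrow> nat \<Rightarrow> nat \<Rightarrow> nat \<Rightarrow> (nat \<Rightarrow> nat) set \<Rightarrow> bool" where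
  "AED q n h t C \<longleftrightarrow> C \<subseteq> words q n \<and>
     (\<forall>x\<in>C. \<forall>y\<in>Out q n h t x. y \<noteq> x \<longrightarrow> y \<notin> C)"

definition optimal_AED :: "nat \<Rightarrow> nat \<Rightarrow> nat \<Rightarrow> nat \<Rightarrow> (nat \<Rightarrow> nat) set \<Rightarrow> bool" where
  "optimal_AED q n h t C \<longleftrightarrow> AED q n h t C \<and>
     (\<forall>D. AED q n h t D \<longrightarrow> card D \<le> card C)"

definition sum_code :: "nat \<Rightarrow> nat \<Rightarrow> nat \<Rightarrow> nat \<Rightarrow> (nat \<Rightarrow> nat) set" where
  "sum_code q n t j = {x \<in> words q n. (\<Sum>i<n. x i) mod (t + 1) = j}"

end

theory Submission
  imports Defs "HOL-Library.FuncSet"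
begin

definition gmap :: "nat \<Rightarrow> (nat \<Rightarrow> nat) \<Rightarrow> (nat \<Rightarrow> nat)" where
  "gmap t x = x(0 := x 0 - x 0 mod (t+1))"

definition Gset :: "nat \<Rightarrow> nat \<Rightarrow> nat \<Rightarrow> (nat \<Rightarrow> nat) set" where
  "Gset q n t = {x \<in> words q n. x 0 mod (t+1) = 0}"

lemma sum_split0:
  assumes "0 < n" shows "(\<Sum>i<n. f i) = f (0::nat) + (\<Sum>i\<in>{1..<n}. f i)"
proof -
  have "{..<n} = insert 0 {1..<n}" using assms by auto
  then show ?thesis by simp
qed

lemma sum_upd0: "(\<Sum>i\<in>{1..<n::nat}. (x(0 := v)) i) = (\<Sum>i\<in>{1..<n}. x i)"
  by (rule sum.cong) auto

lemma words_bij: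
  "bij_betw (\<lambda>x. restrict x {..<n}) (words q n) (PiE {..<n} (\<lambda>_. {..<q}))"
proof (rule bij_betw_byWitness[where f' = "\<lambda>y i. if i < n then y i else 0"])
  show "\<forall>a\<in>words q n. (\<lambda>i. if i < n then restrict a {..<n} i else 0) = a"
    by (auto simp: words_def fun_eq_iff)
  show "\<forall>a'\<in>{..<n} \<rightarrow>\<^sub>E {..<q}. restrict (\<lambda>i. if i < n then a' i else 0) {..<n} = a'"
    by (auto simp: PiE_def extensional_def fun_eq_iff)
  show "(\<lambda>x. restrict x {..<n}) ` words q n \<subseteq> {..<n} \<rightarrow>\<^sub>E {..<q}"
    by (auto simp: words_def PiE_iff split: if_split_asm)
  show "(\<lambda>y i. if i < n then y i else 0) ` ({..<n} \<rightarrow>\<^sub>E {..<q}) \<subseteq> words q n"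
    by (auto simp: words_def PiE_def Pi_def)
qed

lemma words_card: "card (words q n) = q ^ n" and words_finite: "finite (words q n)"
proof -
  have "card (words q n) = card (PiE {..<n} (\<lambda>_. {..<q::nat}))"
    using bij_betw_same_card[OF words_bij] .
  then show "card (words q n) = q ^ n" by (simp add: card_PiE)
  show "finite (words q n)" using bij_betw_finite[OF words_bij, of q n] by (simp add: finite_PiE)
qed

lemma to_Out:
  assumes "x \<in> words q n" "x' \<in> words q n" "0 < n" "0 < h"
    "\<And>i. i \<noteq> 0 \<Longrightarrow> x i = x' i" "x 0 \<le> x' 0" "x' 0 - x 0 \<le> t"
  shows "x' \<in> Out q n h t x"
proof -
  have "\<forall>i<n. x i \<le> x' i"
  proof (intro allI impI)
    fix i assume "i < n"
    show "x i \<le> x' i"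
    proof (cases "i = 0")
      case True then show ?thesis using assms(6) by simp
    next
      case False then show ?thesis using assms(5)[OF False] by simp
    qed
  qed
  moreover have "card {i. i < n \<and> x' i \<noteq> x i} \<le> h"
  proof -
    have "{i. i < n \<and> x' i \<noteq> x i} \<subseteq> {0}"
    proof
      fix i assume "i \<in> {i. i < n \<and> x' i \<noteq> x i}"
      then have "x' i \<noteq> x i" by simp
      then have "i = 0" using assms(5)[of i] by auto
      then show "i \<in> {0}" by simp
    qed
    then have "card {i. i < n \<and> x' i \<noteq> x i} \<le> card {0::nat}"
      by (intro card_mono) auto
    then show ?thesis using assms(4) by simp
  qed
  moreover have "(\<Sum>i<n. x' i - x i) \<le> t"
  proof -
    have "(\<Sum>i\<in>{1..<n}. x' i - x i) = 0"
    proof (rule sum.neutral, rule ballI)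
      fix i assume "i \<in> {1..<n}"
      then have "i \<noteq> 0" by simp
      then show "x' i - x i = 0" using assms(5)[of i] by simp
    qed
    then show ?thesis using sum_split0[OF assms(3), of "\<lambda>i. x' i - x i"] assms(7) by simp
  qed
  ultimately show ?thesis using assms(2) by (simp add: Out_def)
qed

lemma gmap_oth: assumes "gmap t x = gmap t x'" "i \<noteq> 0" shows "x i = x' i"
proof - have "gmap t x i = gmap t x' i" using assms by simp
  then show ?thesis using assms(2) by (simp add: gmap_def) qed
lemma gmap_0: assumes "gmap t x = gmap t x'" shows "x 0 - x 0 mod (t+1) = x' 0 - x' 0 mod (t+1)"
proof - have "gmap t x 0 = gmap t x' 0" using assms by simp
  then show ?thesis by (simp add: gmap_def) qed
lemma blk_eq: "(a::nat) - a mod m = b - b mod m \<Longrightarrow> a mod m = b mod m \<Longrightarrow> a = b"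
  by (metis minus_mod_eq_mult_div mult_div_mod_eq)
lemma blk_diff: "(a::nat) - a mod m = b - b mod m \<Longrightarrow> a \<le> b \<Longrightarrow> b - a \<le> b mod m"
  by (metis diff_le_mono2 diff_diff_cancel mod_less_eq_dividend le_trans diff_le_self)
lemma gmap_G: assumes "x \<in> words q n" "0 < n" shows "gmap t x \<in> Gset q n t"
proof -
  have "x 0 < q" using assms by (simp add: words_def)
  then have a: "x 0 - x 0 mod (t+1) < q" by linarith
  have b: "(x 0 - x 0 mod (t+1)) mod (t+1) = 0" by (metis minus_mod_eq_mult_div mod_mult_self1_is_0)
  show ?thesis using assms a b unfolding gmap_def Gset_def words_def by auto
qed
lemma r_prop: assumes "j' \<le> t" shows "((j' + (t+1) - S mod (t+1)) mod (t+1) + S) mod (t+1) = (j'::nat)"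
proof -
  define m where "m = t + 1"
  have s: "S mod m < m" unfolding m_def by simp
  have "j' + m - S mod m + S = j' + m + m * (S div m)"
    using s by (metis add_diff_assoc2 less_imp_le add.assoc diff_add_cancel le_add2 mod_mult_div_eq add_diff_cancel_left' nat_le_linear mult_div_mod_eq add.commute)
  then have "((j' + m - S mod m) mod m + S) mod m = (j' + m + m * (S div m)) mod m"
    by (metis mod_add_left_eq)
  also have "\<dots> = (j' + m * (S div m + 1)) mod m" by (simp add: algebra_simps)
  also have "\<dots> = j' mod m" by (rule mod_mult_self2)
  also have "\<dots> = j'" using assms unfolding m_def by simp
  finally show ?thesis unfolding m_def .
qed
lemma blk_lt: assumes "(y0::nat) = (t+1)*k" "q = (t+1)*m" "y0 < q" "r \<le> t" shows "y0 + r < q"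
proof -
  have "(t+1)*k < (t+1)*m" using assms by simp
  then have "k < m" by (metis mult_less_cancel1)
  then have "(t+1)*(k+1) \<le> (t+1)*m" by (intro mult_le_mono2) simp
  then show ?thesis using assms by (simp add: algebra_simps)
qed
lemma blk_back: assumes "(a::nat) mod m = 0" "r < m" shows "(a + r) - (a + r) mod m = a" "(a+r) mod m = r"
  using assms by (auto simp: mod_add_left_eq[symmetric])

theorem theorem4:
  fixes q n h t j :: nat
  assumes "0 < q" and "0 < n" and "0 < h" and "0 < t" and "h \<le> n"
    and "(t + 1) dvd q" and "j \<le> t"
  shows "optimal_AED q n h t (sum_code q n t j)
         \<and> real (card (sum_code q n t j)) = real q ^ n / real (t + 1)"
proof -
  note n0 = assms(2)
  have aed: "AED q n h t (sum_code q n t j')" for j'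
  proof -
    have "y \<notin> sum_code q n t j'" if x: "x \<in> sum_code q n t j'" and y: "y \<in> Out q n h t x"
      and ne: "y \<noteq> x" for x y
    proof
      assume yc: "y \<in> sum_code q n t j'"
      have xw: "x \<in> words q n" and yw: "y \<in> words q n" using x y by (auto simp: sum_code_def Out_def)
      have le: "\<forall>i<n. x i \<le> y i" and st: "(\<Sum>i<n. y i - x i) \<le> t" using y by (auto simp: Out_def)
      obtain i where i: "i < n" "y i \<noteq> x i"
      proof -
        from ne obtain i where yi: "y i \<noteq> x i" by (auto simp: fun_eq_iff)
        have "i < n"
        proof (rule ccontr)
          assume "\<not> i < n"
          then have "x i = 0" "y i = 0" using xw yw by (auto simp: words_def)
          then show False using yi by simp
        qed
        then show ?thesis using that yi by blast
      qed
      have pos: "0 < (\<Sum>i<n. y i - x i)"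
        using i le by (intro sum_pos2[of _ i]) auto
      have "(\<Sum>i<n. x i + (y i - x i)) = (\<Sum>i<n. y i)" using le by (intro sum.cong) auto
      then have eq: "(\<Sum>i<n. y i) = (\<Sum>i<n. x i) + (\<Sum>i<n. y i - x i)"
        by (simp add: sum.distrib)
      have "(\<Sum>i<n. y i) mod (t+1) = (\<Sum>i<n. x i) mod (t+1)"
        using x yc by (simp add: sum_code_def)
      then have "(t+1) dvd (\<Sum>i<n. y i - x i)"
        using eq mod_eq_dvd_iff_nat[of "\<Sum>i<n. x i" "\<Sum>i<n. y i" "t+1"] by simp
      then show False using pos st by (auto dest: dvd_imp_le)
    qed
    then show ?thesis by (auto simp: AED_def sum_code_def)
  qed
  have bij: "bij_betw (gmap t) (sum_code q n t j') (Gset q n t)" if jt: "j' \<le> t" for j'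
  proof (rule bij_betw_imageI)
    show "inj_on (gmap t) (sum_code q n t j')"
    proof
      fix x x' assume x: "x \<in> sum_code q n t j'" and x': "x' \<in> sum_code q n t j'"
        and g: "gmap t x = gmap t x'"
      have oth: "x i = x' i" if "i \<noteq> 0" for i using gmap_oth[OF g that] .
      have S: "(\<Sum>i\<in>{1..<n}. x i) = (\<Sum>i\<in>{1..<n}. x' i)" using oth by (intro sum.cong) auto
      have "(x 0 + (\<Sum>i\<in>{1..<n}. x i)) mod (t+1) = (x' 0 + (\<Sum>i\<in>{1..<n}. x i)) mod (t+1)"
        using x x' S sum_split0[OF n0, of x] sum_split0[OF n0, of x'] by (simp add: sum_code_def)
      then have m: "x 0 mod (t+1) = x' 0 mod (t+1)" using nat_mod_eq_iff by auto
      have "x 0 = x' 0" using blk_eq[OF gmap_0[OF g] m] .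
      then show "x = x'" using oth by (metis ext)
    qed
    show "gmap t ` sum_code q n t j' = Gset q n t"
    proof
      show "gmap t ` sum_code q n t j' \<subseteq> Gset q n t"
        using gmap_G n0 by (auto simp: sum_code_def)
      show "Gset q n t \<subseteq> gmap t ` sum_code q n t j'"
      proof
        fix y assume y: "y \<in> Gset q n t"
        define S where "S = (\<Sum>i\<in>{1..<n}. y i)"
        define r where "r = (j' + (t+1) - S mod (t+1)) mod (t+1)"
        define x where "x = y(0 := y 0 + r)"
        have rt: "r < t + 1" unfolding r_def by simp
        obtain k where k: "y 0 = (t+1) * k" using y by (auto simp: Gset_def)
        obtain m where m: "q = (t+1) * m" using assms(6) by auto
        have "y 0 < q" using y n0 by (auto simp: Gset_def words_def)
        then have "y 0 + r < q" using blk_lt[OF k m] rt by simp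
        then have xw: "x \<in> words q n" using y n0 by (auto simp: x_def Gset_def words_def)
        have "(r + S) mod (t+1) = j'" using r_prop[OF jt, of S] by (simp add: r_def)
        moreover have "(\<Sum>i<n. x i) = y 0 + (r + S)"
          using sum_split0[OF n0, of x] sum_upd0[where n=n and x=y and v="y 0 + r"] by (simp add: x_def S_def)
        moreover have "(y 0 + (r+S)) mod (t+1) = (r+S) mod (t+1)" using k by (metis mod_mult_self4)
        ultimately have xs: "x \<in> sum_code q n t j'" using xw unfolding sum_code_def by simp
        have y0: "y 0 mod (t+1) = 0" using y by (simp add: Gset_def)
        have "gmap t x = y" using blk_back[OF y0 rt]
          by (simp add: gmap_def x_def fun_eq_iff)
        then show "y \<in> gmap t ` sum_code q n t j'" using xs by blast
      qed
    qed
  qed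
  have finG: "finite (Gset q n t)" using words_finite[of q n] by (rule rev_finite_subset) (auto simp: Gset_def)
  have cardj: "card (sum_code q n t j') = card (Gset q n t)" if "j' \<le> t" for j'
    using bij[OF that] bij_betw_same_card by blast
  have opt: "card D \<le> card (sum_code q n t j)" if D: "AED q n h t D" for D
  proof -
    have Dw: "D \<subseteq> words q n" using D by (simp add: AED_def)
    have key: "x = x'" if xx: "x \<in> D" "x' \<in> D" and g: "gmap t x = gmap t x'" and le: "x 0 \<le> x' 0" for x x'
    proof (rule ccontr)
      assume ne: "x \<noteq> x'"
      have oth: "x i = x' i" if "i \<noteq> 0" for i using gmap_oth[OF g that] .
      have h1: "x' 0 mod (t+1) \<le> t" using mod_less_divisor[of "t+1" "x' 0"] by linarith
      have "x' 0 - x 0 \<le> t" using le_trans[OF blk_diff[OF gmap_0[OF g] le] h1] .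
      then have "x' \<in> Out q n h t x" using to_Out[of x q n x' h t] xx le Dw n0 assms(3) oth by (meson subsetD)
      then show False using D xx ne by (auto simp: AED_def)
    qed
    have inj: "inj_on (gmap t) D"
      by (rule inj_onI) (metis key nle_le)
    have sub: "gmap t ` D \<subseteq> Gset q n t" using gmap_G Dw n0 by auto
    have "card D = card (gmap t ` D)" using inj by (simp add: card_image)
    also have "\<dots> \<le> card (Gset q n t)" using sub finG by (rule card_mono[rotated])
    finally show ?thesis using cardj[OF assms(7)] by simp
  qed
  have W: "words q n = (\<Union>j'\<in>{..t}. sum_code q n t j')"
    by (auto simp: sum_code_def)
  have "q ^ n = card (\<Union>j'\<in>{..t}. sum_code q n t j')" by (simp only: W[symmetric] words_card)
  also have "\<dots> = (\<Sum>j'\<in>{..t}. card (sum_code q n t j'))"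
    by (rule card_UN_disjoint) (auto simp: sum_code_def intro: rev_finite_subset[OF words_finite])
  also have "\<dots> = (t+1) * card (Gset q n t)" using cardj by simp
  finally have "q ^ n = (t+1) * card (sum_code q n t j)" using cardj[OF assms(7)] by simp
  then have "real q ^ n = real (t+1) * real (card (sum_code q n t j))" by (metis of_nat_mult of_nat_power)
  then have c: "real (card (sum_code q n t j)) = real q ^ n / real (t + 1)" by (simp add: field_simps)
  show ?thesis using aed opt c by (simp add: optimal_AED_def)
qed

end
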